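(* Let $\mathcal D[t]\subset\mathcal H\subset\mathcal D^\times[t^\times]$ be a rigged Hilbert space with $\mathcal D[t]$ a reflexive Fréchet space, $(X,\mu)$ a $\sigma$-finite measure space, $\omega,\theta$ Bessel distribution maps and $m\in L^\infty(X,\mu)$. Suppose the outer multiplier $\mathcal M_{m,\omega,\theta}:\mathcal D\to\mathcal D^\times$ is bijective with continuous inverse $\mathcal D^\times[t^\times]\to\mathcal D[t]$. Then (i) $M_{m,\omega,\theta}:D(M_{m,\omega,\theta})\to\mathcal H$ is bijective, densely defined in $\mathcal H$, and has a bounded inverse (in particular it is closed); (ii) $(M_{m,\omega,\theta})^*=M_{\overline m,\theta,\omega}$.
   Context: Rigged Hilbert space: $\mathcal D$ dense subspace of Hilbert space $\mathcal H$ with a locally convex topology $t$ finer than the norm topology, $\mathcal D^\times$ its conjugate dual with strong dual topology, $\mathcal H\subset\mathcal D^\times$ (continuous dense inclusions), pairing $\langle F,f\rangle$ extending the inner product, $\langle f,F\rangle:=\overline{\langle F,f\rangle}$. $\omega:X\to\mathcal D^\times$ is a Bessel distribution map if $x\mapsto\langle f,\omega_x\rangle$ is measurable and $\int_X|\langle f,\omega_x\rangle|^2d\mu<\infty$ for all $f\in\mathcal D$. Outer distribution multiplier: $\mathcal M_{m,\omega,\theta}$ is the continuous linear map $\mathcal D\to\mathcal D^\times$ with $\langle\mathcal M_{m,\omega,\theta}f,g\rangle=\int_X m(x)\langle f,\omega_x\rangle\langle\theta_x,g\rangle d\mu$ for $f,g\in\mathcal D$. Distribution multiplier $M_{m,\omega,\theta}$: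 domain is the set of $f\in\mathcal D$ for which $g\mapsto\int_X m(x)\langle f,\omega_x\rangle\langle\theta_x,g\rangle d\mu$ ($g\in\mathcal D$) is defined and bounded in the $\mathcal H$-norm, and $M_{m,\omega,\theta}f\in\mathcal H$ is its Riesz representative (equivalently, $D(M_{m,\omega,\theta})=\{f\in\mathcal D:\mathcal M_{m,\omega,\theta}f\in\mathcal H\}$ and $M_{m,\omega,\theta}$ is the restriction of $\mathcal M_{m,\omega,\theta}$). *)

theory Defs
  imports "HOL-Analysis.Analysis"
begin

section \<open>Complex Hilbert spaces (the library only has real inner product spaces)\<close>

class chilbert = ab_group_add +
  fixes cscale :: "complex \<Rightarrow> 'a \<Rightarrow> 'a"
    and cinner :: "'a \<Rightarrow> 'a \<Rightarrow> complex"
  assumes cscale_add_right: "cscale a (x + y) = cscale a x + cscale a y"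
    and cscale_add_left: "cscale (a + b) x = cscale a x + cscale b x"
    and cscale_cscale: "cscale a (cscale b x) = cscale (a * b) x"
    and cscale_one: "cscale 1 x = x"
    and cinner_add_left: "cinner (x + y) z = cinner x z + cinner y z"
    and cinner_scale_left: "cinner (cscale a x) y = a * cinner x y"
    and cinner_commute: "cinner y x = cnj (cinner x y)"
    and cinner_nonneg: "0 \<le> Re (cinner x x)"
    and cinner_eq_zero: "cinner x x = 0 \<longleftrightarrow> x = 0"
    and chilbert_complete:
      "(\<forall>e>0. \<exists>N. \<forall>m n. N \<le> m \<and> N \<le> n \<longrightarrow>
            sqrt (Re (cinner (X m - X n) (X m - X n))) < e)
       \<Longrightarrow> \<exists>L. (\<lambda>n. sqrt (Re (cinner (X n - L) (X n - L)))) \<longlonglongrightarrow> 0"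

definition cnorm :: "'a::chilbert \<Rightarrow> real" where
  "cnorm x = sqrt (Re (cinner x x))"

definition cnorm_top :: "'a::chilbert topology" where
  "cnorm_top = topology (\<lambda>U. \<forall>x\<in>U. \<exists>e>0. \<forall>y. cnorm (y - x) < e \<longrightarrow> y \<in> U)"

section \<open>Locally convex spaces, generic in the vector operations\<close>

definition lin_subspace :: "('a \<Rightarrow> 'a \<Rightarrow> 'a) \<Rightarrow> (complex \<Rightarrow> 'a \<Rightarrow> 'a) \<Rightarrow> 'a \<Rightarrow> 'a set \<Rightarrow> bool" where
  "lin_subspace add scal z S \<longleftrightarrow> z \<in> S \<and> (\<forall>x\<in>S. \<forall>y\<in>S. add x y \<in> S) \<and> (\<forall>c. \<forall>x\<in>S. scal c x \<in> S)"

definition lctvs :: "('a \<Rightarrow> 'a \<Rightarrow> 'a) \<Rightarrow> (complex \<Rightarrow> 'a \<Rightarrow> 'a) \<Rightarrow> 'a \<Rightarrow> 'a topology \<Rightarrow> bool" where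
  "lctvs add scal z T \<longleftrightarrow>
     lin_subspace add scal z (topspace T) \<and> Hausdorff_space T \<and>
     continuous_map (prod_topology T T) T (\<lambda>p. add (fst p) (snd p)) \<and>
     continuous_map (prod_topology (euclidean :: complex topology) T) T (\<lambda>p. scal (fst p) (snd p)) \<and>
     (\<forall>U. openin T U \<and> z \<in> U \<longrightarrow>
        (\<exists>V. openin T V \<and> z \<in> V \<and> V \<subseteq> U \<and>
           (\<forall>x\<in>V. \<forall>y\<in>V. \<forall>a::real. 0 \<le> a \<and> a \<le> 1 \<longrightarrow>
               add (scal (complex_of_real a) x) (scal (complex_of_real (1 - a)) y) \<in> V)))"

definition tvs_complete :: "('a \<Rightarrow> 'a \<Rightarrow> 'a) \<Rightarrow> (complex \<Rightarrow> 'a \<Rightarrow> 'a) \<Rightarrow> 'a \<Rightarrow> 'a topology \<Rightarrow> bool" where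
  "tvs_complete add scal z T \<longleftrightarrow>
     (\<forall>X. (\<forall>n. X n \<in> topspace T) \<and>
          (\<forall>U. openin T U \<and> z \<in> U \<longrightarrow>
             (\<exists>N. \<forall>m n. N \<le> m \<and> N \<le> n \<longrightarrow> add (X m) (scal (-1) (X n)) \<in> U))
        \<longrightarrow> (\<exists>L\<in>topspace T. limitin T X L sequentially))"

definition frechet :: "('a \<Rightarrow> 'a \<Rightarrow> 'a) \<Rightarrow> (complex \<Rightarrow> 'a \<Rightarrow> 'a) \<Rightarrow> 'a \<Rightarrow> 'a topology \<Rightarrow> bool" where
  "frechet add scal z T \<longleftrightarrow> lctvs add scal z T \<and> metrizable_space T \<and> tvs_complete add scal z T"

definition tvs_bounded :: "('a \<Rightarrow> 'a \<Rightarrow> 'a) \<Rightarrow> (complex \<Rightarrow> 'a \<Rightarrow> 'a) \<Rightarrow> 'a \<Rightarrow> 'a topology \<Rightarrow> 'a set \<Rightarrow> bool" where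
  "tvs_bounded add scal z T B \<longleftrightarrow> B \<subseteq> topspace T \<and>
     (\<forall>U. openin T U \<and> z \<in> U \<longrightarrow> (\<exists>r>0. \<forall>c. cmod c \<le> r \<longrightarrow> (\<forall>x\<in>B. scal c x \<in> U)))"

text \<open>Conjugate dual: continuous conjugate-linear functionals (extended by 0 off the space).
  For \<open>F\<close> in the dual, \<open>F f\<close> is the pairing \<open>\<langle>F,f\<rangle>\<close>.\<close>
definition conj_dual :: "('a \<Rightarrow> 'a \<Rightarrow> 'a) \<Rightarrow> (complex \<Rightarrow> 'a \<Rightarrow> 'a) \<Rightarrow> 'a \<Rightarrow> 'a topology \<Rightarrow> ('a \<Rightarrow> complex) set" where
  "conj_dual add scal z T = {F.
     (\<forall>x\<in>topspace T. \<forall>y\<in>topspace T. F (add x y) = F x + F y) \<and>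
     (\<forall>c. \<forall>x\<in>topspace T. F (scal c x) = cnj c * F x) \<and>
     continuous_map T (euclidean :: complex topology) F \<and>
     (\<forall>x. x \<notin> topspace T \<longrightarrow> F x = 0)}"

definition strong_top :: "('a \<Rightarrow> 'a \<Rightarrow> 'a) \<Rightarrow> (complex \<Rightarrow> 'a \<Rightarrow> 'a) \<Rightarrow> 'a \<Rightarrow> 'a topology \<Rightarrow> ('a \<Rightarrow> complex) topology" where
  "strong_top add scal z T = topology (\<lambda>U. U \<subseteq> conj_dual add scal z T \<and>
     (\<forall>F\<in>U. \<exists>B e. tvs_bounded add scal z T B \<and> e > 0 \<and>
        {G \<in> conj_dual add scal z T. \<forall>f\<in>B. cmod (G f - F f) < e} \<subseteq> U))"

definition fadd :: "('a \<Rightarrow> complex) \<Rightarrow> ('a \<Rightarrow> complex) \<Rightarrow> 'a \<Rightarrow> complex" where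
  "fadd F G = (\<lambda>x. F x + G x)"
definition fscal :: "complex \<Rightarrow> ('a \<Rightarrow> complex) \<Rightarrow> 'a \<Rightarrow> complex" where
  "fscal c F = (\<lambda>x. c * F x)"
definition fzero :: "'a \<Rightarrow> complex" where
  "fzero = (\<lambda>x. 0)"

definition reflexive_space :: "('a \<Rightarrow> 'a \<Rightarrow> 'a) \<Rightarrow> (complex \<Rightarrow> 'a \<Rightarrow> 'a) \<Rightarrow> 'a \<Rightarrow> 'a topology \<Rightarrow> bool" where
  "reflexive_space add scal z T \<longleftrightarrow>
     (let Dx = conj_dual add scal z T; Tx = strong_top add scal z T;
          J = (\<lambda>f F. if F \<in> Dx then cnj (F f) else 0)
      in bij_betw J (topspace T) (conj_dual fadd fscal fzero Tx) \<and>
         homeomorphic_map T (strong_top fadd fscal fzero Tx) J)"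

abbreviation Dcross :: "'h::chilbert topology \<Rightarrow> ('h \<Rightarrow> complex) set" where
  "Dcross t \<equiv> conj_dual (+) cscale 0 t"
abbreviation Dcross_top :: "'h::chilbert topology \<Rightarrow> ('h \<Rightarrow> complex) topology" where
  "Dcross_top t \<equiv> strong_top (+) cscale 0 t"

definition hemb :: "'h::chilbert set \<Rightarrow> 'h \<Rightarrow> 'h \<Rightarrow> complex" where
  "hemb D h = (\<lambda>g. if g \<in> D then cinner h g else 0)"

definition rigged_hilbert :: "'h::chilbert set \<Rightarrow> 'h topology \<Rightarrow> bool" where
  "rigged_hilbert D t \<longleftrightarrow>
     topspace t = D \<and> lctvs (+) cscale 0 t \<and>
     (\<forall>U. openin cnorm_top U \<longrightarrow> openin t (U \<inter> D)) \<and>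
     cnorm_top closure_of D = UNIV \<and>
     (\<forall>h. hemb D h \<in> Dcross t) \<and>
     continuous_map cnorm_top (Dcross_top t) (hemb D) \<and>
     (Dcross_top t) closure_of (range (hemb D)) = Dcross t"

text \<open>Bessel distribution map; \<open>\<langle>f,\<omega>\<^sub>x\<rangle> = cnj (\<omega> x f)\<close>.\<close>
definition bessel_map :: "'x measure \<Rightarrow> 'h::chilbert topology \<Rightarrow> ('x \<Rightarrow> 'h \<Rightarrow> complex) \<Rightarrow> bool" where
  "bessel_map \<mu> t \<omega> \<longleftrightarrow>
     (\<forall>x\<in>space \<mu>. \<omega> x \<in> Dcross t) \<and>
     (\<forall>f\<in>topspace t. (\<lambda>x. cnj (\<omega> x f)) \<in> borel_measurable \<mu> \<and>
        (\<integral>\<^sup>+x. ennreal ((cmod (\<omega> x f))\<^sup>2) \<partial>\<mu>) < \<infinity>)"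

text \<open>Outer distribution multiplier \<open>\<langle>\<M> f, g\<rangle> = \<integral> m(x) \<langle>f,\<omega>\<^sub>x\<rangle> \<langle>\<theta>\<^sub>x,g\<rangle> d\<mu>\<close>.\<close>
definition outer_mult :: "'x measure \<Rightarrow> 'h::chilbert set \<Rightarrow> ('x \<Rightarrow> complex) \<Rightarrow>
    ('x \<Rightarrow> 'h \<Rightarrow> complex) \<Rightarrow> ('x \<Rightarrow> 'h \<Rightarrow> complex) \<Rightarrow> 'h \<Rightarrow> 'h \<Rightarrow> complex" where
  "outer_mult \<mu> D m \<omega> \<theta> f = (\<lambda>g. if g \<in> D then (\<integral>x. m x * cnj (\<omega> x f) * \<theta> x g \<partial>\<mu>) else 0)"

definition dmult_dom :: "'x measure \<Rightarrow> 'h::chilbert set \<Rightarrow> ('x \<Rightarrow> complex) \<Rightarrow>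
    ('x \<Rightarrow> 'h \<Rightarrow> complex) \<Rightarrow> ('x \<Rightarrow> 'h \<Rightarrow> complex) \<Rightarrow> 'h set" where
  "dmult_dom \<mu> D m \<omega> \<theta> = {f \<in> D. \<exists>h. \<forall>g\<in>D. outer_mult \<mu> D m \<omega> \<theta> f g = cinner h g}"

definition dmult :: "'x measure \<Rightarrow> 'h::chilbert set \<Rightarrow> ('x \<Rightarrow> complex) \<Rightarrow>
    ('x \<Rightarrow> 'h \<Rightarrow> complex) \<Rightarrow> ('x \<Rightarrow> 'h \<Rightarrow> complex) \<Rightarrow> 'h \<Rightarrow> 'h" where
  "dmult \<mu> D m \<omega> \<theta> f = (THE h. \<forall>g\<in>D. outer_mult \<mu> D m \<omega> \<theta> f g = cinner h g)"

section \<open>Unbounded operators on the Hilbert space (given by a domain and a map)\<close>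

definition closed_op :: "'h::chilbert set \<Rightarrow> ('h \<Rightarrow> 'h) \<Rightarrow> bool" where
  "closed_op S T \<longleftrightarrow> (\<forall>X f h. (\<forall>n. X n \<in> S) \<and> limitin cnorm_top X f sequentially \<and>
      limitin cnorm_top (\<lambda>n. T (X n)) h sequentially \<longrightarrow> f \<in> S \<and> T f = h)"

definition adj_dom :: "'h::chilbert set \<Rightarrow> ('h \<Rightarrow> 'h) \<Rightarrow> 'h set" where
  "adj_dom S T = {g. \<exists>h. \<forall>f\<in>S. cinner (T f) g = cinner f h}"

definition adj :: "'h::chilbert set \<Rightarrow> ('h \<Rightarrow> 'h) \<Rightarrow> 'h \<Rightarrow> 'h" where
  "adj S T g = (THE h. \<forall>f\<in>S. cinner (T f) g = cinner f h)"

end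

theory Submission
  imports Defs
begin


context begin
lemma cscale_zero_left[simp]: "cscale 0 (x::'a::chilbert) = 0"
  using cscale_add_left[of 0 0 x] by simp
lemma cscale_zero_right[simp]: "cscale c (0::'a::chilbert) = 0"
  using cscale_add_right[of c 0 0] by simp
lemma cscale_minus_right: "cscale c (- (x::'a::chilbert)) = - cscale c x"
  using cscale_add_right[of c x "-x"] by (simp add: eq_neg_iff_add_eq_0 add.commute)
lemma cscale_diff_right: "cscale c ((x::'a::chilbert) - y) = cscale c x - cscale c y"
  unfolding diff_conv_add_uminus by (simp only: cscale_add_right cscale_minus_right)
lemma cscale_minus_left: "cscale (-c) (x::'a::chilbert) = - cscale c x"
  using cscale_add_left[of c "-c" x] by (simp add: eq_neg_iff_add_eq_0 add.commute)
lemma cscale_diff_left: "cscale (a - b) (x::'a::chilbert) = cscale a x - cscale b x"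
  unfolding diff_conv_add_uminus by (simp only: cscale_add_left cscale_minus_left)

lemma cinner_zero_left[simp]: "cinner (0::'a::chilbert) y = 0"
  using cinner_add_left[of 0 0 y] by simp
lemma cinner_zero_right[simp]: "cinner (y::'a::chilbert) 0 = 0"
  using cinner_commute[of 0 y] by simp
lemma cinner_add_right: "cinner (x::'a::chilbert) (y + z) = cinner x y + cinner x z"
  by (metis cinner_add_left cinner_commute complex_cnj_add)
lemma cinner_scale_right: "cinner (x::'a::chilbert) (cscale a y) = cnj a * cinner x y"
  by (metis cinner_scale_left cinner_commute complex_cnj_mult)
lemma cinner_minus_left: "cinner (- (x::'a::chilbert)) y = - cinner x y"
  using cinner_add_left[of x "-x" y] by (simp add: eq_neg_iff_add_eq_0 add.commute)
lemma cinner_minus_right: "cinner (x::'a::chilbert) (- y) = - cinner x y"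
  by (metis cinner_minus_left cinner_commute complex_cnj_minus)
lemma cinner_diff_left: "cinner ((x::'a::chilbert) - y) z = cinner x z - cinner y z"
  unfolding diff_conv_add_uminus by (simp only: cinner_add_left cinner_minus_left)
lemma cinner_diff_right: "cinner (x::'a::chilbert) (y - z) = cinner x y - cinner x z"
  unfolding diff_conv_add_uminus by (simp only: cinner_add_right cinner_minus_right)
lemma cinner_self_real: "cinner (x::'a::chilbert) x = complex_of_real (Re (cinner x x))"
  by (metis cinner_commute complex_is_Real_iff Reals_cnj_iff of_real_Re)

lemma cnorm_ge0[simp]: "cnorm x \<ge> 0"
  by (simp add: cnorm_def cinner_nonneg)
lemma cnorm_sq: "(cnorm x)^2 = Re (cinner x x)"
  by (simp add: cnorm_def cinner_nonneg)
lemma cnorm_zero_iff[simp]: "cnorm x = 0 \<longleftrightarrow> x = 0"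
  by (metis cinner_eq_zero cinner_self_real cnorm_def of_real_0 real_sqrt_eq_zero_cancel_iff zero_complex.simps(1))
lemma cnorm_zero[simp]: "cnorm 0 = 0" by simp

lemma cinner_expand: "cinner ((x::'a::chilbert) - cscale a y) (x - cscale a y)
   = cinner x x - cnj a * cinner x y - a * cinner y x + a * cnj a * cinner y y"
  by (simp add: cinner_diff_left cinner_diff_right cinner_scale_left cinner_scale_right algebra_simps)

lemma cauchy_schwarz: "(cmod (cinner (x::'a::chilbert) y))^2 \<le> Re (cinner x x) * Re (cinner y y)"
proof (cases "y = 0")
  case True then show ?thesis by simp
next
  case False
  define ny where "ny = Re (cinner y y)"
  have nypos: "ny > 0" using False cinner_nonneg[of y] cinner_eq_zero[of y] cinner_self_real[of y]
    unfolding ny_def by (metis less_eq_real_def of_real_0)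
  have yy: "cinner y y = complex_of_real ny" using cinner_self_real ny_def by simp
  define a where "a = cinner x y / complex_of_real ny"
  have yx: "cinner y x = cnj (cinner x y)" by (rule cinner_commute)
  have nz: "complex_of_real ny \<noteq> 0" using nypos by simp
  define X where "X = cinner x y * cnj (cinner x y) / complex_of_real ny"
  have e1: "cnj a * cinner x y = X" "a * cnj (cinner x y) = X" "a * cnj a * complex_of_real ny = X"
    using nz by (simp_all add: a_def X_def field_simps)
  have X: "X = complex_of_real ((cmod (cinner x y))^2 / ny)"
    unfolding X_def complex_norm_square[symmetric] by simp
  have "cinner (x - cscale a y) (x - cscale a y) = cinner x x - complex_of_real ((cmod (cinner x y))^2 / ny)"
    unfolding cinner_expand yy yx e1 X[symmetric] by simp
  moreover have "0 \<le> Re (cinner (x - cscale a y) (x - cscale a y))" by (rule cinner_nonneg)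
  ultimately have "0 \<le> Re (cinner x x) - (cmod (cinner x y))^2 / ny" by (metis Re_complex_of_real minus_complex.sel(1))
  then have "(cmod (cinner x y))^2 / ny \<le> Re (cinner x x)" by simp
  then show ?thesis using nypos unfolding ny_def by (simp add: pos_divide_le_eq)
qed

lemma cinner_bound: "cmod (cinner x y) \<le> cnorm x * cnorm y"
proof -
  have "(cmod (cinner x y))^2 \<le> (cnorm x * cnorm y)^2"
    using cauchy_schwarz[of x y] by (simp add: power_mult_distrib cnorm_sq)
  then show ?thesis by (simp add: power_mono_iff)
qed

lemma cnorm_scale: "cnorm (cscale c (x::'a::chilbert)) = cmod c * cnorm x"
proof -
  have "Re (cinner (cscale c x) (cscale c x)) = (cmod c)^2 * Re (cinner x x)"
    by (subst cinner_self_real) (simp add: cinner_scale_left cinner_scale_right mult.assoc[symmetric] complex_mult_cnj power2_eq_square flip: of_real_mult, metis cmod_power2 power2_eq_square)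
  then show ?thesis by (simp add: cnorm_def real_sqrt_mult)
qed
lemma cnorm_minus: "cnorm (- (x::'a::chilbert)) = cnorm x"
  by (simp add: cnorm_def cinner_minus_left cinner_minus_right)
lemma cnorm_commute: "cnorm ((x::'a::chilbert) - y) = cnorm (y - x)"
  by (metis cnorm_minus minus_diff_eq)
lemma cnorm_sq_add: "Re (cinner ((x::'a::chilbert) + y) (x + y)) = Re (cinner x x) + Re (cinner y y) + 2 * Re (cinner x y)"
proof -
  have "Re (cinner y x) = Re (cinner x y)" by (subst cinner_commute) simp
  then show ?thesis by (simp add: cinner_add_left cinner_add_right)
qed
lemma cnorm_triangle: "cnorm ((x::'a::chilbert) + y) \<le> cnorm x + cnorm y"
proof -
  have "Re (cinner x y) \<le> cnorm x * cnorm y"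
    using cinner_bound[of x y] complex_Re_le_cmod[of "cinner x y"] by linarith
  then have "(cnorm (x + y))^2 \<le> (cnorm x + cnorm y)^2"
    unfolding cnorm_sq cnorm_sq_add power2_sum by (simp add: cnorm_sq)
  then show ?thesis using power2_le_imp_le by fastforce
qed
lemma cnorm_triangle_diff: "cnorm ((x::'a::chilbert) - z) \<le> cnorm (x - y) + cnorm (y - z)"
  using cnorm_triangle[of "x - y" "y - z"] by simp

definition cnormP :: "'a::chilbert set \<Rightarrow> bool" where
  "cnormP = (\<lambda>U. \<forall>x\<in>U. \<exists>e>0. \<forall>y. cnorm (y - x) < e \<longrightarrow> y \<in> U)"

lemma istopology_cnormP: "istopology (cnormP :: 'a::chilbert set \<Rightarrow> bool)"
  unfolding istopology_def cnormP_def
proof (intro conjI allI impI)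
  fix S T :: "'a set"
  assume S: "\<forall>x\<in>S. \<exists>e>0. \<forall>y. cnorm (y - x) < e \<longrightarrow> y \<in> S"
    and T: "\<forall>x\<in>T. \<exists>e>0. \<forall>y. cnorm (y - x) < e \<longrightarrow> y \<in> T"
  show "\<forall>x\<in>S \<inter> T. \<exists>e>0. \<forall>y. cnorm (y - x) < e \<longrightarrow> y \<in> S \<inter> T"
  proof
    fix x assume x: "x \<in> S \<inter> T"
    obtain e1 where "e1 > 0" "\<forall>y. cnorm (y - x) < e1 \<longrightarrow> y \<in> S" using S x by blast
    moreover obtain e2 where "e2 > 0" "\<forall>y. cnorm (y - x) < e2 \<longrightarrow> y \<in> T" using T x by blast
    ultimately show "\<exists>e>0. \<forall>y. cnorm (y - x) < e \<longrightarrow> y \<in> S \<inter> T"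
      by (intro exI[of _ "min e1 e2"]) auto
  qed
next
  fix K :: "'a set set"
  assume "\<forall>K\<in>K. \<forall>x\<in>K. \<exists>e>0. \<forall>y. cnorm (y - x) < e \<longrightarrow> y \<in> K"
  note KK = this
  show "\<forall>x\<in>\<Union>K. \<exists>e>0. \<forall>y. cnorm (y - x) < e \<longrightarrow> y \<in> \<Union>K"
  proof
    fix x assume "x \<in> \<Union>K"
    then obtain X where X: "X \<in> K" "x \<in> X" by blast
    have "\<forall>x\<in>X. \<exists>e>0. \<forall>y. cnorm (y - x) < e \<longrightarrow> y \<in> X" using KK X(1) by (rule bspec)
    then obtain e where "e > 0" "\<forall>y. cnorm (y - x) < e \<longrightarrow> y \<in> X" using X(2) by blast
    then show "\<exists>e>0. \<forall>y. cnorm (y - x) < e \<longrightarrow> y \<in> \<Union>K" using X(1) by blast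
  qed
qed

lemma openin_cnorm_top: "openin cnorm_top U \<longleftrightarrow> (\<forall>x\<in>U. \<exists>e>0. \<forall>y. cnorm (y - x) < e \<longrightarrow> y \<in> U)"
proof -
  have "openin cnorm_top = cnormP" unfolding cnorm_top_def cnormP_def[symmetric]
    by (rule topology_inverse'[OF istopology_cnormP])
  from fun_cong[OF this, of U] show ?thesis unfolding cnormP_def by simp
qed

lemma topspace_cnorm_top[simp]: "topspace cnorm_top = UNIV"
proof -
  have "openin cnorm_top UNIV" unfolding openin_cnorm_top by (auto intro: exI[of _ 1])
  then show ?thesis using openin_subset by blast
qed

lemma open_ball_cnorm: "openin cnorm_top {y. cnorm (y - x) < e}"
  unfolding openin_cnorm_top
proof (intro ballI)
  fix z assume "z \<in> {y. cnorm (y - x) < e}"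
  then have z: "cnorm (z - x) < e" by simp
  show "\<exists>d>0. \<forall>y. cnorm (y - z) < d \<longrightarrow> y \<in> {y. cnorm (y - x) < e}"
  proof (intro exI[of _ "e - cnorm (z - x)"] conjI allI impI)
    show "0 < e - cnorm (z - x)" using z by simp
    fix y assume "cnorm (y - z) < e - cnorm (z - x)"
    then show "y \<in> {y. cnorm (y - x) < e}" using cnorm_triangle_diff[of y x z] by simp
  qed
qed

lemma limitin_cnorm: "limitin cnorm_top X f sequentially \<longleftrightarrow> (\<lambda>n. cnorm (X n - f)) \<longlonglongrightarrow> 0"
proof
  assume L: "limitin cnorm_top X f sequentially"
  show "(\<lambda>n. cnorm (X n - f)) \<longlonglongrightarrow> 0"
  proof (rule LIMSEQ_I)
    fix r :: real assume "r > 0"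
    then have "f \<in> {y. cnorm (y - f) < r}" by simp
    then obtain N where "\<forall>n\<ge>N. X n \<in> {y. cnorm (y - f) < r}"
      using L open_ball_cnorm unfolding limitin_sequentially by blast
    then show "\<exists>no. \<forall>n\<ge>no. norm (cnorm (X n - f) - 0) < r" by auto
  qed
next
  assume L: "(\<lambda>n. cnorm (X n - f)) \<longlonglongrightarrow> 0"
  show "limitin cnorm_top X f sequentially"
    unfolding limitin_sequentially
  proof safe
    fix U assume "openin cnorm_top U" "f \<in> U"
    then obtain e where e: "e > 0" "\<forall>y. cnorm (y - f) < e \<longrightarrow> y \<in> U" unfolding openin_cnorm_top by blast
    then obtain N where "\<forall>n\<ge>N. norm (cnorm (X n - f) - 0) < e" using L LIMSEQ_D by blast
    then show "\<exists>N. \<forall>n\<ge>N. X n \<in> U" using e by auto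
  qed simp
qed

lemma closure_cnorm: "x \<in> cnorm_top closure_of S \<longleftrightarrow> (\<forall>e>0. \<exists>y\<in>S. cnorm (y - x) < e)"
  unfolding in_closure_of
proof safe
  fix e :: real assume "\<forall>T. x \<in> T \<and> openin cnorm_top T \<longrightarrow> (\<exists>y. y \<in> S \<and> y \<in> T)" "e > 0"
  note A = this
  have "x \<in> {y. cnorm (y - x) < e}" using A(2) by simp
  then obtain y where "y \<in> S" "y \<in> {y. cnorm (y - x) < e}" using A(1)[rule_format, OF conjI[OF _ open_ball_cnorm]] by blast
  then show "\<exists>y\<in>S. cnorm (y - x) < e" by auto
next
  fix T assume "\<forall>e>0. \<exists>y\<in>S. cnorm (y - x) < e" "x \<in> T" "openin cnorm_top T"
  then show "\<exists>y. y \<in> S \<and> y \<in> T" unfolding openin_cnorm_top by blast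
qed simp

lemma dense_orth_zero:
  assumes "cnorm_top closure_of S = UNIV" "\<forall>g\<in>S. cinner (k::'a::chilbert) g = 0"
  shows "k = 0"
proof (rule ccontr)
  assume "k \<noteq> 0"
  then have "cnorm k > 0" using cnorm_ge0[of k] cnorm_zero_iff[of k] by linarith
  then obtain g where g: "g \<in> S" "cnorm (g - k) < cnorm k"
    using assms(1) closure_cnorm[of k S] by auto
  have "cinner g k = 0" using assms(2) g(1) cinner_commute[of g k] by simp
  then have "(cnorm (g - k))^2 = (cnorm g)^2 + (cnorm k)^2"
    using cnorm_sq_add[of g "-k"] by (simp add: cnorm_sq cinner_minus_right cinner_minus_left)
  then have "(cnorm k)^2 \<le> (cnorm (g - k))^2" by simp
  then show False using g(2) cnorm_ge0[of "g - k"]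
    by (meson not_le power_strict_mono cnorm_ge0 zero_less_numeral)
qed

lemma cont_cinner: "continuous_map cnorm_top euclidean (\<lambda>y. cinner (h::'a::chilbert) y)"
  unfolding continuous_map topspace_cnorm_top
proof safe
  fix U :: "complex set" assume "openin euclidean U"
  then have oU: "open U" by simp
  show "openin cnorm_top {x \<in> UNIV. cinner h x \<in> U}"
    unfolding openin_cnorm_top
  proof safe
    fix x assume "cinner h x \<in> U"
    then obtain r where r: "r > 0" "ball (cinner h x) r \<subseteq> U" using oU open_contains_ball by blast
    show "\<exists>e>0. \<forall>y. cnorm (y - x) < e \<longrightarrow> y \<in> {x \<in> UNIV. cinner h x \<in> U}"
    proof (intro exI[of _ "r / (cnorm h + 1)"] conjI allI impI)
      have hp: "cnorm h + 1 > 0" using cnorm_ge0[of h] by linarith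
      then show "r / (cnorm h + 1) > 0" using r by simp
      fix y assume y: "cnorm (y - x) < r / (cnorm h + 1)"
      have "cmod (cinner h y - cinner h x) \<le> cnorm h * cnorm (y - x)"
        using cinner_bound[of h "y - x"] by (simp add: cinner_diff_right)
      also have "\<dots> \<le> (cnorm h + 1) * cnorm (y - x)" by (simp add: mult_right_mono)
      also have "\<dots> < r" using y hp by (simp add: field_simps)
      finally have "cinner h y \<in> ball (cinner h x) r" by (simp add: dist_norm norm_minus_commute)
      then show "y \<in> {x \<in> UNIV. cinner h x \<in> U}" using r by auto
    qed
  qed
qed simp
end


lemma meas_cnj_b:
  assumes "(\<lambda>x. cnj (b x)) \<in> borel_measurable \<mu>"
  shows "(\<lambda>x. b x) \<in> borel_measurable \<mu>"
proof -
  have "continuous_on UNIV cnj" by (intro continuous_intros)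
  from borel_measurable_continuous_on[OF this assms] show ?thesis by simp
qed

lemma sq_integrable:
  assumes "(\<lambda>x. cnj (a x)) \<in> borel_measurable \<mu>"
    and "(\<integral>\<^sup>+x. ennreal ((cmod (a x))\<^sup>2) \<partial>\<mu>) < \<infinity>"
  shows "integrable \<mu> (\<lambda>x. (cmod (a x))\<^sup>2)"
proof -
  have m: "(\<lambda>x. a x) \<in> borel_measurable \<mu>" by (rule meas_cnj_b[OF assms(1)])
  have "(\<lambda>x. (cmod (a x))\<^sup>2) \<in> borel_measurable \<mu>" using m by measurable
  then show ?thesis unfolding integrable_iff_bounded using assms(2) by simp
qed

lemma integrable_prod:
  assumes a: "(\<lambda>x. cnj (a x)) \<in> borel_measurable \<mu>" "(\<integral>\<^sup>+x. ennreal ((cmod (a x))\<^sup>2) \<partial>\<mu>) < \<infinity>"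
    and b: "(\<lambda>x. cnj (b x)) \<in> borel_measurable \<mu>" "(\<integral>\<^sup>+x. ennreal ((cmod (b x))\<^sup>2) \<partial>\<mu>) < \<infinity>"
    and m: "m \<in> borel_measurable \<mu>" "AE x in \<mu>. cmod (m x) \<le> C"
  shows "integrable \<mu> (\<lambda>x. m x * cnj (a x) * b x)"
proof -
  define C' where "C' = max C 0"
  have i1: "integrable \<mu> (\<lambda>x. C' * ((cmod (a x))\<^sup>2 + (cmod (b x))\<^sup>2))"
    using sq_integrable[OF a] sq_integrable[OF b] by (intro integrable_mult_right Bochner_Integration.integrable_add)
  have m1: "(\<lambda>x. m x * cnj (a x) * b x) \<in> borel_measurable \<mu>"
    using meas_cnj_b[OF b(1)] a(1) m(1) by measurable
  have ae: "AE x in \<mu>. norm (m x * cnj (a x) * b x) \<le> norm (C' * ((cmod (a x))\<^sup>2 + (cmod (b x))\<^sup>2))"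
    using m(2)
  proof eventually_elim
    case (elim x)
    have c: "cmod (m x) \<le> C'" "0 \<le> C'" using elim unfolding C'_def by auto
    have ab: "cmod (a x) * cmod (b x) \<le> (cmod (a x))\<^sup>2 + (cmod (b x))\<^sup>2"
      using sum_squares_ge_zero[of "cmod (a x) - cmod (b x)" 0] by (simp add: power2_eq_square algebra_simps)
         (smt (verit) mult_nonneg_nonneg norm_ge_zero)
    have "norm (m x * cnj (a x) * b x) = cmod (m x) * (cmod (a x) * cmod (b x))"
      by (simp add: norm_mult)
    also have "\<dots> \<le> C' * ((cmod (a x))\<^sup>2 + (cmod (b x))\<^sup>2)"
      using c ab by (intro mult_mono) auto
    finally show ?case using c(2) by simp
  qed
  show ?thesis by (rule Bochner_Integration.integrable_bound[OF i1 m1 ae])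
qed

lemma tvs_bounded_empty: "tvs_bounded add scal z T {}"
  unfolding tvs_bounded_def by (auto intro: exI[of _ 1])

lemma tvs_bounded_Un:
  assumes "tvs_bounded add scal z T B1" "tvs_bounded add scal z T B2"
  shows "tvs_bounded add scal z T (B1 \<union> B2)"
  unfolding tvs_bounded_def
proof (intro conjI allI impI)
  show "B1 \<union> B2 \<subseteq> topspace T" using assms unfolding tvs_bounded_def by auto
  fix U assume U: "openin T U \<and> z \<in> U"
  obtain r1 where r1: "r1 > 0" "\<forall>c. cmod c \<le> r1 \<longrightarrow> (\<forall>x\<in>B1. scal c x \<in> U)"
    using assms(1) U unfolding tvs_bounded_def by blast
  obtain r2 where r2: "r2 > 0" "\<forall>c. cmod c \<le> r2 \<longrightarrow> (\<forall>x\<in>B2. scal c x \<in> U)"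
    using assms(2) U unfolding tvs_bounded_def by blast
  show "\<exists>r>0. \<forall>c. cmod c \<le> r \<longrightarrow> (\<forall>x\<in>B1 \<union> B2. scal c x \<in> U)"
    using r1 r2 by (intro exI[of _ "min r1 r2"]) auto
qed

definition strongP where
  "strongP add scal z T = (\<lambda>U. U \<subseteq> conj_dual add scal z T \<and>
     (\<forall>F\<in>U. \<exists>B e. tvs_bounded add scal z T B \<and> e > 0 \<and>
        {G \<in> conj_dual add scal z T. \<forall>f\<in>B. cmod (G f - F f) < e} \<subseteq> U))"

lemma istopology_strongP: "istopology (strongP add scal z T)"
  unfolding istopology_def
proof (intro conjI allI impI)
  fix S U assume S: "strongP add scal z T S" and U: "strongP add scal z T U"
  show "strongP add scal z T (S \<inter> U)"
    unfolding strongP_def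
  proof (intro conjI ballI)
    show "S \<inter> U \<subseteq> conj_dual add scal z T" using S unfolding strongP_def by auto
    fix F assume F: "F \<in> S \<inter> U"
    obtain B1 e1 where 1: "tvs_bounded add scal z T B1" "e1 > 0"
      "{G \<in> conj_dual add scal z T. \<forall>f\<in>B1. cmod (G f - F f) < e1} \<subseteq> S"
      using S F unfolding strongP_def by blast
    obtain B2 e2 where 2: "tvs_bounded add scal z T B2" "e2 > 0"
      "{G \<in> conj_dual add scal z T. \<forall>f\<in>B2. cmod (G f - F f) < e2} \<subseteq> U"
      using U F unfolding strongP_def by blast
    show "\<exists>B e. tvs_bounded add scal z T B \<and> e > 0 \<and>
        {G \<in> conj_dual add scal z T. \<forall>f\<in>B. cmod (G f - F f) < e} \<subseteq> S \<inter> U"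
    proof (intro exI conjI)
      show "tvs_bounded add scal z T (B1 \<union> B2)" using 1 2 by (intro tvs_bounded_Un)
      show "min e1 e2 > 0" using 1 2 by simp
      show "{G \<in> conj_dual add scal z T. \<forall>f\<in>B1 \<union> B2. cmod (G f - F f) < min e1 e2} \<subseteq> S \<inter> U"
        using 1(3) 2(3) by auto
    qed
  qed
next
  fix K assume K: "\<forall>S\<in>K. strongP add scal z T S"
  show "strongP add scal z T (\<Union>K)"
    unfolding strongP_def
  proof (intro conjI ballI)
    show "\<Union>K \<subseteq> conj_dual add scal z T" using K unfolding strongP_def by blast
    fix F assume "F \<in> \<Union>K"
    then obtain S where S: "S \<in> K" "F \<in> S" by blast
    then have "strongP add scal z T S" using K by blast
    then obtain B e where "tvs_bounded add scal z T B" "e > 0"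
      "{G \<in> conj_dual add scal z T. \<forall>f\<in>B. cmod (G f - F f) < e} \<subseteq> S"
      using S(2) unfolding strongP_def by blast
    then show "\<exists>B e. tvs_bounded add scal z T B \<and> e > 0 \<and>
        {G \<in> conj_dual add scal z T. \<forall>f\<in>B. cmod (G f - F f) < e} \<subseteq> \<Union>K"
      using S(1) by blast
  qed
qed

lemma openin_strong: "openin (strong_top add scal z T) = strongP add scal z T"
  unfolding strong_top_def strongP_def[symmetric] by (rule topology_inverse'[OF istopology_strongP])

lemma topspace_strong: "topspace (strong_top add scal z T) = conj_dual add scal z T"
proof -
  have "strongP add scal z T (conj_dual add scal z T)"
    unfolding strongP_def
  proof (intro conjI ballI)
    fix F assume "F \<in> conj_dual add scal z T"
    show "\<exists>B e. tvs_bounded add scal z T B \<and> 0 < e \<and>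
        {G \<in> conj_dual add scal z T. \<forall>f\<in>B. cmod (G f - F f) < e} \<subseteq> conj_dual add scal z T"
      by (intro exI[of _ "{}"] exI[of _ "1::real"]) (auto simp: tvs_bounded_empty)
  qed simp
  then have "conj_dual add scal z T \<subseteq> topspace (strong_top add scal z T)"
    using openin_subset[of "strong_top add scal z T"] by (simp add: openin_strong)
  moreover have "topspace (strong_top add scal z T) \<subseteq> conj_dual add scal z T"
    using openin_topspace[of "strong_top add scal z T"] unfolding openin_strong strongP_def by blast
  ultimately show ?thesis by blast
qed



lemma dmult_eq:
  assumes "cnorm_top closure_of D = UNIV" "\<forall>g\<in>D. outer_mult \<mu> D m \<omega> \<theta> f g = cinner k g"
  shows "dmult \<mu> D m \<omega> \<theta> f = k"
  unfolding dmult_def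
proof (rule the_equality)
  show "\<forall>g\<in>D. outer_mult \<mu> D m \<omega> \<theta> f g = cinner k g" by fact
  fix h assume h: "\<forall>g\<in>D. outer_mult \<mu> D m \<omega> \<theta> f g = cinner h g"
  have "\<forall>g\<in>D. cinner (h - k) g = 0" using h assms(2) by (simp add: cinner_diff_left)
  then have "h - k = 0" by (rule dense_orth_zero[OF assms(1)])
  then show "h = k" by simp
qed

lemma dmult_prop:
  assumes "cnorm_top closure_of D = UNIV" "f \<in> dmult_dom \<mu> D m \<omega> \<theta>"
  shows "\<forall>g\<in>D. outer_mult \<mu> D m \<omega> \<theta> f g = cinner (dmult \<mu> D m \<omega> \<theta> f) g"
proof -
  obtain k where k: "\<forall>g\<in>D. outer_mult \<mu> D m \<omega> \<theta> f g = cinner k g"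
    using assms(2) unfolding dmult_dom_def by blast
  then show ?thesis using dmult_eq[OF assms(1) k] by simp
qed

lemma dmult_dom_D: "f \<in> dmult_dom \<mu> D m \<omega> \<theta> \<Longrightarrow> f \<in> D"
  unfolding dmult_dom_def by blast

locale msetting =
  fixes D :: "'h::chilbert set" and t :: "'h topology"
    and \<mu> :: "'x measure" and m :: "'x \<Rightarrow> complex"
    and \<omega> \<theta> :: "'x \<Rightarrow> 'h \<Rightarrow> complex"
  assumes rhs: "rigged_hilbert D t"
    and bom: "bessel_map \<mu> t \<omega>"
    and bth: "bessel_map \<mu> t \<theta>"
    and m_meas: "m \<in> borel_measurable \<mu>"
    and m_bdd: "\<exists>C. AE x in \<mu>. cmod (m x) \<le> C"
    and bij: "bij_betw (outer_mult \<mu> D m \<omega> \<theta>) D (Dcross t)"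
    and inv_cont: "continuous_map (Dcross_top t) t (the_inv_into D (outer_mult \<mu> D m \<omega> \<theta>))"
begin

abbreviation "Mo \<equiv> outer_mult \<mu> D m \<omega> \<theta>"
abbreviation "Iv \<equiv> the_inv_into D Mo"
abbreviation "Dm \<equiv> dmult_dom \<mu> D m \<omega> \<theta>"
abbreviation "Md \<equiv> dmult \<mu> D m \<omega> \<theta>"

lemma top_t: "topspace t = D" using rhs unfolding rigged_hilbert_def by blast
lemma lctvs_t: "lctvs (+) cscale 0 t" using rhs unfolding rigged_hilbert_def by blast
lemma lin: "0 \<in> D" "f \<in> D \<Longrightarrow> g \<in> D \<Longrightarrow> f + g \<in> D" "f \<in> D \<Longrightarrow> cscale c f \<in> D"
  using lctvs_t top_t unfolding lctvs_def lin_subspace_def by auto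
lemma dense_D: "cnorm_top closure_of D = UNIV" using rhs unfolding rigged_hilbert_def by blast
lemma hemb_in: "hemb D h \<in> Dcross t" using rhs unfolding rigged_hilbert_def by blast
lemma hemb_cont: "continuous_map cnorm_top (Dcross_top t) (hemb D)"
  using rhs unfolding rigged_hilbert_def by blast
lemma t_open: "openin cnorm_top U \<Longrightarrow> openin t (U \<inter> D)"
  using rhs unfolding rigged_hilbert_def by blast
lemma hemb_dense: "Dcross_top t closure_of (range (hemb D)) = Dcross t"
  using rhs unfolding rigged_hilbert_def by blast
lemma top_strong: "topspace (Dcross_top t) = Dcross t" by (rule topspace_strong)

lemma dual_add: "F \<in> Dcross t \<Longrightarrow> f \<in> D \<Longrightarrow> g \<in> D \<Longrightarrow> F (f + g) = F f + F g"
  unfolding conj_dual_def top_t by blast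
lemma dual_scal: "F \<in> Dcross t \<Longrightarrow> f \<in> D \<Longrightarrow> F (cscale c f) = cnj c * F f"
  unfolding conj_dual_def top_t by blast
lemma dual_out: "F \<in> Dcross t \<Longrightarrow> f \<notin> D \<Longrightarrow> F f = 0"
  unfolding conj_dual_def top_t by blast

lemma om_dual: "x \<in> space \<mu> \<Longrightarrow> \<omega> x \<in> Dcross t" using bom unfolding bessel_map_def by blast

lemma integ: "f \<in> D \<Longrightarrow> g \<in> D \<Longrightarrow> integrable \<mu> (\<lambda>x. m x * cnj (\<omega> x f) * \<theta> x g)"
proof -
  assume f: "f \<in> D" and g: "g \<in> D"
  obtain C where C: "AE x in \<mu>. cmod (m x) \<le> C" using m_bdd by blast
  show ?thesis
    by (rule integrable_prod[OF _ _ _ _ m_meas C])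
       (use bom bth f g top_t in \<open>auto simp: bessel_map_def\<close>)
qed

lemma Mo_add: "f1 \<in> D \<Longrightarrow> f2 \<in> D \<Longrightarrow> Mo (f1 + f2) = fadd (Mo f1) (Mo f2)"
proof (rule ext)
  fix g assume f: "f1 \<in> D" "f2 \<in> D"
  show "Mo (f1 + f2) g = fadd (Mo f1) (Mo f2) g"
  proof (cases "g \<in> D")
    case True
    have "(\<integral>x. m x * cnj (\<omega> x (f1 + f2)) * \<theta> x g \<partial>\<mu>)
        = (\<integral>x. m x * cnj (\<omega> x f1) * \<theta> x g + m x * cnj (\<omega> x f2) * \<theta> x g \<partial>\<mu>)"
      by (rule Bochner_Integration.integral_cong[OF refl])
         (simp add: dual_add[OF om_dual f] algebra_simps)
    also have "\<dots> = (\<integral>x. m x * cnj (\<omega> x f1) * \<theta> x g \<partial>\<mu>) + (\<integral>x. m x * cnj (\<omega> x f2) * \<theta> x g \<partial>\<mu>)"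
      using integ[OF f(1) True] integ[OF f(2) True] by (rule Bochner_Integration.integral_add)
    finally show ?thesis using True unfolding outer_mult_def fadd_def by simp
  qed (simp add: outer_mult_def fadd_def)
qed

lemma Mo_scal: "f \<in> D \<Longrightarrow> Mo (cscale c f) = fscal c (Mo f)"
proof (rule ext)
  fix g assume f: "f \<in> D"
  show "Mo (cscale c f) g = fscal c (Mo f) g"
  proof (cases "g \<in> D")
    case True
    have "(\<integral>x. m x * cnj (\<omega> x (cscale c f)) * \<theta> x g \<partial>\<mu>)
        = (\<integral>x. c * (m x * cnj (\<omega> x f) * \<theta> x g) \<partial>\<mu>)"
      by (rule Bochner_Integration.integral_cong[OF refl])
         (simp add: dual_scal[OF om_dual f] algebra_simps)
    also have "\<dots> = c * (\<integral>x. m x * cnj (\<omega> x f) * \<theta> x g \<partial>\<mu>)"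
      by (rule integral_mult_right_zero)
    finally show ?thesis using True unfolding outer_mult_def fscal_def by simp
  qed (simp add: outer_mult_def fscal_def)
qed

lemma inj_Mo: "inj_on Mo D" using bij unfolding bij_betw_def by blast
lemma Mo_in: "f \<in> D \<Longrightarrow> Mo f \<in> Dcross t" using bij unfolding bij_betw_def by blast
lemma Iv_in: "F \<in> Dcross t \<Longrightarrow> Iv F \<in> D"
  using bij unfolding bij_betw_def by (blast intro: the_inv_into_into)
lemma Mo_Iv: "F \<in> Dcross t \<Longrightarrow> Mo (Iv F) = F"
  using bij by (rule f_the_inv_into_f_bij_betw)
lemma Iv_Mo: "f \<in> D \<Longrightarrow> Iv (Mo f) = f"
  using inj_Mo by (rule the_inv_into_f_f)

lemma Iv_add: "F1 \<in> Dcross t \<Longrightarrow> F2 \<in> Dcross t \<Longrightarrow> Iv (fadd F1 F2) = Iv F1 + Iv F2"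
  by (rule the_inv_into_f_eq[OF inj_Mo]) (simp_all add: Mo_add Iv_in Mo_Iv lin)
lemma Iv_scal: "F \<in> Dcross t \<Longrightarrow> Iv (fscal c F) = cscale c (Iv F)"
  by (rule the_inv_into_f_eq[OF inj_Mo]) (simp_all add: Mo_scal Iv_in Mo_Iv lin)
lemma fadd_in: "F1 \<in> Dcross t \<Longrightarrow> F2 \<in> Dcross t \<Longrightarrow> fadd F1 F2 \<in> Dcross t"
  by (metis Iv_in Mo_Iv Mo_add Mo_in lin(2))
lemma fscal_in: "F \<in> Dcross t \<Longrightarrow> fscal c F \<in> Dcross t"
  by (metis Iv_in Mo_Iv Mo_scal Mo_in lin(3))

lemma hemb_add: "hemb D (h1 + h2) = fadd (hemb D h1) (hemb D h2)"
  by (auto simp: hemb_def fadd_def cinner_add_left)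
lemma hemb_scal: "hemb D (cscale c h) = fscal c (hemb D h)"
  by (auto simp: hemb_def fscal_def cinner_scale_left)

definition L where "L k = Iv (hemb D k)"

lemma Mo_hemb: "Mo f = hemb D k \<longleftrightarrow> (\<forall>g\<in>D. Mo f g = cinner k g)"
  by (auto simp: hemb_def outer_mult_def fun_eq_iff)

lemma L_D: "L k \<in> D" unfolding L_def by (rule Iv_in[OF hemb_in])
lemma Mo_L: "Mo (L k) = hemb D k" unfolding L_def by (rule Mo_Iv[OF hemb_in])
lemma L_dom: "L k \<in> Dm"
  using Mo_L[of k] L_D unfolding Mo_hemb dmult_dom_def by blast
lemma Md_L: "Md (L k) = k"
  using Mo_L[of k] unfolding Mo_hemb by (rule dmult_eq[OF dense_D])
lemma L_Md: "f \<in> Dm \<Longrightarrow> L (Md f) = f"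
proof -
  assume f: "f \<in> Dm"
  have "Mo f = hemb D (Md f)" unfolding Mo_hemb using dmult_prop[OF dense_D f] .
  then show ?thesis unfolding L_def using Iv_Mo dmult_dom_D[OF f] by metis
qed
lemma inj_Md: "inj_on Md Dm" by (metis L_Md inj_onI)
lemma inv_Md: "the_inv_into Dm Md h = L h"
  by (rule the_inv_into_f_eq[OF inj_Md Md_L L_dom])
lemma L_add: "L (h1 + h2) = L h1 + L h2"
  unfolding L_def hemb_add by (rule Iv_add[OF hemb_in hemb_in])
lemma L_scal: "L (cscale c h) = cscale c (L h)"
  unfolding L_def hemb_scal by (rule Iv_scal[OF hemb_in])
lemma L_zero: "L 0 = 0"
  using L_add[of 0 0] by simp
lemma L_diff: "L (h1 - h2) = L h1 - L h2"
  by (metis L_add diff_add_cancel eq_diff_eq)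

lemma id_cont: "continuous_map t cnorm_top (\<lambda>x. x)"
  unfolding continuous_map topspace_cnorm_top top_t
proof (intro conjI allI impI)
  fix U :: "'h set" assume "openin cnorm_top U"
  then have "openin t (U \<inter> D)" by (rule t_open)
  moreover have "{x \<in> D. x \<in> U} = U \<inter> D" by blast
  ultimately show "openin t {x \<in> D. x \<in> U}" by simp
qed simp

lemma L_cont: "continuous_map cnorm_top cnorm_top L"
proof -
  have "continuous_map cnorm_top cnorm_top ((\<lambda>x. x) \<circ> (Iv \<circ> hemb D))"
    by (rule continuous_map_compose[OF continuous_map_compose[OF hemb_cont inv_cont] id_cont])
  then show ?thesis unfolding L_def[abs_def] comp_def .
qed

lemma L_bound: "\<exists>C. \<forall>h. cnorm (L h) \<le> C * cnorm h"
proof -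
  have "openin cnorm_top {x \<in> topspace cnorm_top. L x \<in> {y. cnorm (y - 0) < 1}}"
    by (rule openin_continuous_map_preimage[OF L_cont open_ball_cnorm])
  then have o: "openin cnorm_top {x. cnorm (L x) < 1}" by simp
  have "0 \<in> {x. cnorm (L x) < 1}" by (simp add: L_zero)
  then obtain e where e: "e > 0" "\<forall>y. cnorm (y - 0) < e \<longrightarrow> y \<in> {x. cnorm (L x) < 1}"
    using o unfolding openin_cnorm_top by blast
  show ?thesis
  proof (intro exI[of _ "2 / e"] allI)
    fix h
    show "cnorm (L h) \<le> 2 / e * cnorm h"
    proof (cases "h = 0")
      case True then show ?thesis by (simp add: L_zero)
    next
      case False
      then have hp: "cnorm h > 0" using cnorm_ge0[of h] cnorm_zero_iff[of h] by linarith
      define c where "c = e / (2 * cnorm h)"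
      have cp: "c > 0" using hp e(1) unfolding c_def by simp
      have "cnorm (cscale (complex_of_real c) h) = c * cnorm h"
        using cp by (simp add: cnorm_scale)
      also have "c * cnorm h = e / 2" unfolding c_def using hp False by simp
      finally have "cnorm (cscale (complex_of_real c) h) = e / 2" .
      then have "cnorm (L (cscale (complex_of_real c) h)) < 1" using e by simp
      then have "c * cnorm (L h) < 1" using cp unfolding L_scal cnorm_scale by simp
      then have "cnorm (L h) < 1 / c" using cp by (simp add: field_simps)
      also have "1 / c = 2 / e * cnorm h" unfolding c_def using e(1) hp by simp
      finally show ?thesis by simp
    qed
  qed
qed

lemma L_lim: "limitin cnorm_top X h sequentially \<Longrightarrow> limitin cnorm_top (\<lambda>n. L (X n)) (L h) sequentially"
proof -
  assume X: "limitin cnorm_top X h sequentially"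
  obtain C where C: "\<forall>h. cnorm (L h) \<le> C * cnorm h" using L_bound by blast
  have t: "(\<lambda>n. cnorm (X n - h)) \<longlonglongrightarrow> 0" using X unfolding limitin_cnorm .
  have "(\<lambda>n. C * cnorm (X n - h)) \<longlonglongrightarrow> C * 0" by (intro tendsto_intros t)
  then have t2: "(\<lambda>n. C * cnorm (X n - h)) \<longlonglongrightarrow> 0" by simp
  show ?thesis unfolding limitin_cnorm
  proof (rule real_tendsto_sandwich[OF _ _ tendsto_const t2])
    show "\<forall>\<^sub>F n in sequentially. 0 \<le> cnorm (L (X n) - L h)" by simp
    show "\<forall>\<^sub>F n in sequentially. cnorm (L (X n) - L h) \<le> C * cnorm (X n - h)"
      using C by (simp add: L_diff[symmetric])
  qed
qed

lemma lim_unique: "limitin cnorm_top X a sequentially \<Longrightarrow> limitin cnorm_top X b sequentially \<Longrightarrow> a = b"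
proof -
  assume a: "limitin cnorm_top X a sequentially" and b: "limitin cnorm_top X b sequentially"
  have ta: "(\<lambda>n. cnorm (X n - a)) \<longlonglongrightarrow> 0" and tb: "(\<lambda>n. cnorm (X n - b)) \<longlonglongrightarrow> 0"
    using a b unfolding limitin_cnorm by auto
  have "(\<lambda>n. cnorm (X n - a) + cnorm (X n - b)) \<longlonglongrightarrow> 0 + 0" by (intro tendsto_intros ta tb)
  then have s: "(\<lambda>n. cnorm (X n - a) + cnorm (X n - b)) \<longlonglongrightarrow> 0" by simp
  have "(\<lambda>n. cnorm (a - b)) \<longlonglongrightarrow> 0"
  proof (rule real_tendsto_sandwich[OF _ _ tendsto_const s])
    show "\<forall>\<^sub>F n in sequentially. 0 \<le> cnorm (a - b)" by simp
    show "\<forall>\<^sub>F n in sequentially. cnorm (a - b) \<le> cnorm (X n - a) + cnorm (X n - b)"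
    proof (intro always_eventually allI)
      fix n
      show "cnorm (a - b) \<le> cnorm (X n - a) + cnorm (X n - b)"
        using cnorm_triangle_diff[of a b "X n"] cnorm_commute[of a "X n"] by simp
    qed
  qed
  then have "cnorm (a - b) = 0" using LIMSEQ_const_iff by blast
  then show "a = b" by simp
qed

lemma closed_Md: "closed_op Dm Md"
  unfolding closed_op_def
proof (intro allI impI, elim conjE)
  fix X f h
  assume X: "\<forall>n. X n \<in> Dm" and f: "limitin cnorm_top X f sequentially"
    and h: "limitin cnorm_top (\<lambda>n. Md (X n)) h sequentially"
  have "limitin cnorm_top (\<lambda>n. L (Md (X n))) (L h) sequentially" by (rule L_lim[OF h])
  then have "limitin cnorm_top X (L h) sequentially" using X L_Md by simp
  then have "f = L h" using f lim_unique by blast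
  then show "f \<in> Dm \<and> Md f = h" by (simp add: L_dom Md_L)
qed

lemma bij_Md: "bij_betw Md Dm UNIV"
  unfolding bij_betw_def
proof
  show "inj_on Md Dm" by (rule inj_Md)
  have "h \<in> Md ` Dm" for h using L_dom[of h] Md_L[of h] by (metis image_eqI)
  then show "Md ` Dm = UNIV" by blast
qed

lemma dense_dom: "cnorm_top closure_of Dm = UNIV"
proof -
  have "D \<subseteq> cnorm_top closure_of Dm"
  proof
    fix x assume x: "x \<in> D"
    show "x \<in> cnorm_top closure_of Dm"
      unfolding in_closure_of
    proof (intro conjI allI impI, simp, elim conjE)
      fix U assume xU: "x \<in> U" and U: "openin cnorm_top U"
      have oUD: "openin t (U \<inter> D)" by (rule t_open[OF U])
      define V where "V = {G \<in> topspace (Dcross_top t). Iv G \<in> U \<inter> D}"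
      have oV: "openin (Dcross_top t) V" unfolding V_def
        by (rule openin_continuous_map_preimage[OF inv_cont oUD])
      have FV: "Mo x \<in> V" unfolding V_def top_strong using Mo_in[OF x] Iv_Mo[OF x] x xU by simp
      have "Mo x \<in> Dcross_top t closure_of (range (hemb D))" using hemb_dense Mo_in[OF x] by simp
      then obtain y where "y \<in> range (hemb D)" "y \<in> V" using FV oV unfolding in_closure_of by blast
      then obtain k where "Iv (hemb D k) \<in> U" unfolding V_def by blast
      then show "\<exists>y. y \<in> Dm \<and> y \<in> U" using L_dom unfolding L_def by blast
    qed
  qed
  then have "cnorm_top closure_of D \<subseteq> cnorm_top closure_of Dm"
    by (metis closure_of_closure_of closure_of_mono)
  then show ?thesis using dense_D by blast
qed

end


lemma conj_dualI:
  "(\<forall>x\<in>topspace T. \<forall>y\<in>topspace T. F (add x y) = F x + F y) \<Longrightarrow>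
   (\<forall>c. \<forall>x\<in>topspace T. F (scal c x) = cnj c * F x) \<Longrightarrow>
   continuous_map T euclidean F \<Longrightarrow> (\<forall>x. x \<notin> topspace T \<longrightarrow> F x = 0) \<Longrightarrow>
   F \<in> conj_dual add scal z T"
  unfolding conj_dual_def by blast

locale msetting_refl = msetting +
  assumes refl_sp: "reflexive_space (+) cscale 0 t"
begin

abbreviation "Mo' \<equiv> outer_mult \<mu> D (\<lambda>x. cnj (m x)) \<theta> \<omega>"
abbreviation "Dm' \<equiv> dmult_dom \<mu> D (\<lambda>x. cnj (m x)) \<theta> \<omega>"
abbreviation "Md' \<equiv> dmult \<mu> D (\<lambda>x. cnj (m x)) \<theta> \<omega>"

lemma outer_sym: "f \<in> D \<Longrightarrow> g \<in> D \<Longrightarrow> Mo' g f = cnj (Mo f g)"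
proof -
  assume f: "f \<in> D" and g: "g \<in> D"
  have "cnj (\<integral>x. m x * cnj (\<omega> x f) * \<theta> x g \<partial>\<mu>) = (\<integral>x. cnj (m x * cnj (\<omega> x f) * \<theta> x g) \<partial>\<mu>)"
    by (rule Bochner_Integration.integral_cnj[symmetric])
  also have "\<dots> = (\<integral>x. cnj (m x) * cnj (\<theta> x g) * \<omega> x f \<partial>\<mu>)"
    by (rule Bochner_Integration.integral_cong[OF refl]) (simp add: algebra_simps)
  finally show ?thesis using f g unfolding outer_mult_def by simp
qed

lemma adj_sup: "g \<in> Dm' \<Longrightarrow> \<forall>f\<in>Dm. cinner (Md f) g = cinner f (Md' g)"
proof
  fix f assume g: "g \<in> Dm'" and f: "f \<in> Dm"
  have gD: "g \<in> D" and fD: "f \<in> D" using g f by (auto dest: dmult_dom_D)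
  have k: "Mo' g f = cinner (Md' g) f" using dmult_prop[OF dense_D g] fD by blast
  have "cinner (Md f) g = Mo f g" using dmult_prop[OF dense_D f] gD by simp
  also have "\<dots> = cnj (Mo' g f)" using outer_sym[OF fD gD] by simp
  also have "\<dots> = cinner f (Md' g)" using k cinner_commute[of f "Md' g"] by simp
  finally show "cinner (Md f) g = cinner f (Md' g)" .
qed

lemma adj_eq: "\<forall>f\<in>Dm. cinner (Md f) g = cinner f k \<Longrightarrow> adj Dm Md g = k"
  unfolding adj_def
proof (rule the_equality)
  assume k: "\<forall>f\<in>Dm. cinner (Md f) g = cinner f k"
  then show "\<forall>f\<in>Dm. cinner (Md f) g = cinner f k" .
  fix h assume h: "\<forall>f\<in>Dm. cinner (Md f) g = cinner f h"
  have "\<forall>f\<in>Dm. cinner (h - k) f = 0"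
  proof
    fix f assume "f \<in> Dm"
    then have "cinner f (h - k) = 0" using h k by (simp add: cinner_diff_right)
    then show "cinner (h - k) f = 0" using cinner_commute[of "h - k" f] by simp
  qed
  then have "h - k = 0" by (rule dense_orth_zero[OF dense_dom])
  then show "h = k" by simp
qed

lemma adj_sub: "g \<in> adj_dom Dm Md \<Longrightarrow> g \<in> Dm'"
proof -
  assume "g \<in> adj_dom Dm Md"
  then obtain h where h: "\<forall>f\<in>Dm. cinner (Md f) g = cinner f h" unfolding adj_dom_def by blast
  define \<Psi> where "\<Psi> = (\<lambda>F. if F \<in> Dcross t then cinner h (Iv F) else 0)"
  have cont: "continuous_map (Dcross_top t) euclidean (cinner h \<circ> ((\<lambda>x. x) \<circ> Iv))"
    by (rule continuous_map_compose[OF continuous_map_compose[OF inv_cont id_cont] cont_cinner])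
  have "\<Psi> \<in> conj_dual fadd fscal fzero (Dcross_top t)"
  proof (rule conj_dualI, unfold top_strong, goal_cases)
    case 1 show ?case
    proof (intro ballI)
    fix F1 F2 assume F: "F1 \<in> Dcross t" "F2 \<in> Dcross t"
    show "\<Psi> (fadd F1 F2) = \<Psi> F1 + \<Psi> F2"
      using F unfolding \<Psi>_def by (simp add: fadd_in Iv_add cinner_add_right)
    qed
  next
    case 2 show ?case
    proof (intro allI ballI)
    fix c F assume F: "F \<in> Dcross t"
    show "\<Psi> (fscal c F) = cnj c * \<Psi> F"
      using F unfolding \<Psi>_def by (simp add: fscal_in Iv_scal cinner_scale_right)
    qed
  next
    case 3 show ?case
      by (rule continuous_map_eq[OF cont]) (simp add: \<Psi>_def top_strong)
  next
    case 4 show ?case unfolding \<Psi>_def by simp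
  qed
  moreover have "bij_betw (\<lambda>f F. if F \<in> Dcross t then cnj (F f) else 0) D
      (conj_dual fadd fscal fzero (Dcross_top t))"
    using refl_sp top_t unfolding reflexive_space_def Let_def by simp
  ultimately have "\<Psi> \<in> (\<lambda>f F. if F \<in> Dcross t then cnj (F f) else 0) ` D"
    unfolding bij_betw_def by blast
  then obtain g' where g': "g' \<in> D" "(\<lambda>F. if F \<in> Dcross t then cnj (F g') else 0) = \<Psi>"
    by (auto elim!: imageE)
  have key: "cnj (F g') = cinner h (Iv F)" if "F \<in> Dcross t" for F
    using fun_cong[OF g'(2), of F] that unfolding \<Psi>_def by simp
  have gg: "cinner k g' = cinner k g" for k
  proof -
    have "cnj (cinner k g') = cnj (hemb D k g')" using g'(1) by (simp add: hemb_def)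
    also have "\<dots> = cinner h (L k)" unfolding L_def by (rule key[OF hemb_in])
    also have "\<dots> = cnj (cinner (L k) h)" by (rule cinner_commute)
    also have "cinner (L k) h = cinner (Md (L k)) g" using h L_dom by simp
    also have "\<dots> = cinner k g" by (simp add: Md_L)
    finally show ?thesis by simp
  qed
  have "cinner (g' - g) (g' - g) = 0" using gg[of "g' - g"] by (simp add: cinner_diff_right)
  then have "g' - g = 0" by (simp only: cinner_eq_zero)
  then have gg': "g = g'" by simp
  then have gD: "g \<in> D" using g'(1) by simp
  show "g \<in> Dm'" unfolding dmult_dom_def
  proof (intro CollectI conjI exI ballI)
    show "g \<in> D" by fact
    fix f assume fD: "f \<in> D"
    have "Mo' g f = cnj (Mo f g)" by (rule outer_sym[OF fD gD])
    also have "cnj (Mo f g) = cnj (Mo f g')" using gg' by simp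
    also have "\<dots> = cinner h (Iv (Mo f))" by (rule key[OF Mo_in[OF fD]])
    also have "\<dots> = cinner h f" by (simp add: Iv_Mo[OF fD])
    finally show "Mo' g f = cinner h f" .
  qed
qed

lemma adj_dom_eq: "adj_dom Dm Md = Dm'"
proof
  show "adj_dom Dm Md \<subseteq> Dm'" using adj_sub by blast
  show "Dm' \<subseteq> adj_dom Dm Md" unfolding adj_dom_def using adj_sup by blast
qed

lemma adj_val: "g \<in> Dm' \<Longrightarrow> adj Dm Md g = Md' g"
  by (rule adj_eq[OF adj_sup])

end

theorem proposition4p1:
  fixes D :: "'h::chilbert set" and t :: "'h topology"
    and \<mu> :: "'x measure" and m :: "'x \<Rightarrow> complex"
    and \<omega> \<theta> :: "'x \<Rightarrow> 'h \<Rightarrow> complex"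
  assumes rhs: "rigged_hilbert D t"
    and fre: "frechet (+) cscale 0 t"
    and refl: "reflexive_space (+) cscale 0 t"
    and sf: "sigma_finite_measure \<mu>"
    and bom: "bessel_map \<mu> t \<omega>"
    and bth: "bessel_map \<mu> t \<theta>"
    and m_meas: "m \<in> borel_measurable \<mu>"
    and m_bdd: "\<exists>C. AE x in \<mu>. cmod (m x) \<le> C"
    and bij: "bij_betw (outer_mult \<mu> D m \<omega> \<theta>) D (Dcross t)"
    and inv_cont: "continuous_map (Dcross_top t) t (the_inv_into D (outer_mult \<mu> D m \<omega> \<theta>))"
  shows "bij_betw (dmult \<mu> D m \<omega> \<theta>) (dmult_dom \<mu> D m \<omega> \<theta>) UNIV
      \<and> cnorm_top closure_of (dmult_dom \<mu> D m \<omega> \<theta>) = UNIV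
      \<and> (\<exists>C. \<forall>h. cnorm (the_inv_into (dmult_dom \<mu> D m \<omega> \<theta>) (dmult \<mu> D m \<omega> \<theta>) h) \<le> C * cnorm h)
      \<and> closed_op (dmult_dom \<mu> D m \<omega> \<theta>) (dmult \<mu> D m \<omega> \<theta>)
      \<and> adj_dom (dmult_dom \<mu> D m \<omega> \<theta>) (dmult \<mu> D m \<omega> \<theta>) = dmult_dom \<mu> D (\<lambda>x. cnj (m x)) \<theta> \<omega>
      \<and> (\<forall>g\<in>dmult_dom \<mu> D (\<lambda>x. cnj (m x)) \<theta> \<omega>.
           adj (dmult_dom \<mu> D m \<omega> \<theta>) (dmult \<mu> D m \<omega> \<theta>) g = dmult \<mu> D (\<lambda>x. cnj (m x)) \<theta> \<omega> g)"
  proof -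
  interpret msetting_refl D t \<mu> m \<omega> \<theta>
    using rhs bom bth m_meas m_bdd bij inv_cont refl
    by (simp add: msetting_refl_def msetting_def msetting_refl_axioms_def)
  show ?thesis
    using bij_Md dense_dom L_bound closed_Md adj_dom_eq adj_val by (simp add: inv_Md)
qed

end
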